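(* For all $a,d,x\in\mathbb C$ and $n\in\mathbb C$ with $d-n\in\mathbb N$, $$f(a,d,n)_x=f(a-1,d,n)_x+f(a-1,d,n+1)_{x-1}$$ and $$f(a,d,n)_x=f(a-1,d,n)_{x+1}+f(a-1,d,n+1)_{x+1}.$$
   Context: For $z\in\mathbb C$ and $k\in\mathbb N$, $\binom{z}{k}=\frac{z(z-1)\cdots(z-k+1)}{k!}$. For $a,d,x,n\in\mathbb C$ with $d-n\in\mathbb N\cup\{-1\}$, $f(a,d,n)_x=\sum_{k=0}^{d-n}\binom{a+d+x-k}{k}\binom{d+k-x}{d-n-k}$, the empty sum (when $d-n=-1$) being $0$. *)

theory Defs
  imports Complex_Main
begin

definition fpoly :: "complex \<Rightarrow> complex \<Rightarrow> complex \<Rightarrow> complex \<Rightarrow> complex" where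
  "fpoly a d n x =
     (if \<exists>m::nat. d - n = of_nat m then
        (let m = (THE m::nat. d - n = of_nat m) in
          \<Sum>k\<le>m. ((a + d + x - of_nat k) gchoose k) * ((d + of_nat k - x) gchoose (m - k)))
      else 0)"

end

theory Submission
  imports Defs
begin

definition G :: "complex \<Rightarrow> complex \<Rightarrow> nat \<Rightarrow> complex" where
  "G u v m = (\<Sum>k\<le>m. ((u - of_nat k) gchoose k) * ((v + of_nat k) gchoose (m - k)))"

lemma fpoly_nat:
  assumes "d - n = of_nat m"
  shows "fpoly a d n x = G (a + d + x) (d - x) m"
proof -
  have ex: "\<exists>m::nat. d - n = of_nat m" using assms by blast
  have th: "(THE m::nat. d - n = of_nat m) = m" using assms by (intro the_equality) auto
  show ?thesis unfolding fpoly_def G_def using ex th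
    by (simp add: Let_def algebra_simps)
qed

lemma fpoly_neg:
  assumes "d - n = -1"
  shows "fpoly a d n x = 0"
proof -
  have "\<not> (\<exists>m::nat. d - n = of_nat m)"
  proof
    assume "\<exists>m::nat. d - n = of_nat m"
    then obtain m :: nat where "d - n = of_nat m" by blast
    with assms have "(of_nat m :: complex) = -1" by simp
    hence "Re (of_nat m :: complex) = -1" by simp
    thus False by simp
  qed
  thus ?thesis unfolding fpoly_def by simp
qed

lemma pascal: "(w + 1) gchoose (Suc k) = (w gchoose k) + (w gchoose (Suc k))"
  for w :: complex by (rule gbinomial_Suc_Suc)

lemma L1_0: "G u v 0 = G (u - 1) v 0" by (simp add: G_def)

lemma L1: "G u v (Suc m) = G (u - 1) v (Suc m) + G (u - 2) (v + 1) m"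
proof -
  have t: "((u - of_nat (Suc i)) gchoose Suc i) =
           ((u - 1 - of_nat (Suc i)) gchoose Suc i) + ((u - 2 - of_nat i) gchoose i)" for i
  proof -
    have "u - of_nat (Suc i) = (u - 2 - of_nat i) + 1" by simp
    hence "((u - of_nat (Suc i)) gchoose Suc i) = ((u - 2 - of_nat i) gchoose i) + ((u - 2 - of_nat i) gchoose Suc i)"
      using pascal by metis
    moreover have eq: "u - 1 - of_nat (Suc i) = u - 2 - of_nat i" by simp
    ultimately show ?thesis by (simp only: eq add.commute)
  qed
  have "G u v (Suc m) = (v gchoose Suc m) + (\<Sum>i\<le>m. ((u - of_nat (Suc i)) gchoose Suc i) * ((v + of_nat (Suc i)) gchoose (m - i)))"
    unfolding G_def by (subst sum.atMost_Suc_shift) simp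
  also have "\<dots> = (v gchoose Suc m) + (\<Sum>i\<le>m. ((u - 1 - of_nat (Suc i)) gchoose Suc i) * ((v + of_nat (Suc i)) gchoose (m - i)))
       + (\<Sum>i\<le>m. ((u - 2 - of_nat i) gchoose i) * ((v + 1 + of_nat i) gchoose (m - i)))"
    apply (simp only: add.assoc sum.distrib[symmetric])
    apply (rule arg_cong[where f="\<lambda>z. _ + z"])
    apply (rule sum.cong)
     apply simp
    apply (subst t)
    apply (simp add: distrib_right)
    done
  also have "(v gchoose Suc m) + (\<Sum>i\<le>m. ((u - 1 - of_nat (Suc i)) gchoose Suc i) * ((v + of_nat (Suc i)) gchoose (m - i))) = G (u - 1) v (Suc m)"
    unfolding G_def by (subst sum.atMost_Suc_shift) simp
  also have "(\<Sum>i\<le>m. ((u - 2 - of_nat i) gchoose i) * ((v + 1 + of_nat i) gchoose (m - i))) = G (u - 2) (v + 1) m"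
    unfolding G_def by simp
  finally show ?thesis .
qed

lemma L2_0: "G u v 0 = G u (v - 1) 0" by (simp add: G_def)

lemma L2: "G u v (Suc m) = G u (v - 1) (Suc m) + G u (v - 1) m"
proof -
  have t: "k \<le> m \<Longrightarrow> ((v + of_nat k) gchoose (Suc m - k)) =
     ((v - 1 + of_nat k) gchoose (Suc m - k)) + ((v - 1 + of_nat k) gchoose (m - k))" for k
  proof -
    assume "k \<le> m"
    hence e: "Suc m - k = Suc (m - k)" by simp
    have "v + of_nat k = (v - 1 + of_nat k) + 1" by simp
    thus ?thesis unfolding e using pascal by (metis add.commute)
  qed
  have "G u v (Suc m) = (\<Sum>k\<le>m. ((u - of_nat k) gchoose k) * ((v + of_nat k) gchoose (Suc m - k)))
      + ((u - of_nat (Suc m)) gchoose Suc m)"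
    unfolding G_def by simp
  also have "(\<Sum>k\<le>m. ((u - of_nat k) gchoose k) * ((v + of_nat k) gchoose (Suc m - k)))
     = (\<Sum>k\<le>m. ((u - of_nat k) gchoose k) * ((v - 1 + of_nat k) gchoose (Suc m - k)))
     + (\<Sum>k\<le>m. ((u - of_nat k) gchoose k) * ((v - 1 + of_nat k) gchoose (m - k)))"
    by (subst sum.distrib[symmetric]) (rule sum.cong, simp, subst t, simp, simp add: distrib_left)
  also have "(\<Sum>k\<le>m. ((u - of_nat k) gchoose k) * ((v - 1 + of_nat k) gchoose (m - k))) = G u (v - 1) m"
    unfolding G_def by simp
  finally have "G u v (Suc m) = ((\<Sum>k\<le>m. ((u - of_nat k) gchoose k) * ((v - 1 + of_nat k) gchoose (Suc m - k)))
      + ((u - of_nat (Suc m)) gchoose Suc m)) + G u (v - 1) m" by (simp add: algebra_simps)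
  also have "(\<Sum>k\<le>m. ((u - of_nat k) gchoose k) * ((v - 1 + of_nat k) gchoose (Suc m - k)))
      + ((u - of_nat (Suc m)) gchoose Suc m) = G u (v - 1) (Suc m)"
    unfolding G_def by simp
  finally show ?thesis .
qed

lemma G0: "G u v 0 = 1" by (simp add: G_def)

theorem lemma4p3:
  fixes a d n x :: complex
  assumes "d - n \<in> \<nat>"
  shows "fpoly a d n x = fpoly (a - 1) d n x + fpoly (a - 1) d (n + 1) (x - 1) \<and>
         fpoly a d n x = fpoly (a - 1) d n (x + 1) + fpoly (a - 1) d (n + 1) (x + 1)"
proof -
  obtain m :: nat where m: "d - n = of_nat m" using assms by (auto elim: Nats_cases)
  show ?thesis
  proof (cases m)
    case 0
    have z: "d - (n + 1) = -1" using m 0 by (simp add: algebra_simps)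
    have m0: "d - n = of_nat 0" using m 0 by simp
    show ?thesis
      by (simp only: fpoly_nat[OF m0] fpoly_neg[OF z] G0) simp
  next
    case (Suc k)
    have z: "d - (n + 1) = of_nat k" using m Suc by (simp add: algebra_simps)
    have ms: "d - n = of_nat (Suc k)" using m Suc by simp
    have e1: "a - 1 + d + (x - 1) = a + d + x - 2" "d - (x - 1) = d - x + 1" "a - 1 + d + x = a + d + x - 1" by simp_all
    have e2: "a - 1 + d + (x + 1) = a + d + x" "d - (x + 1) = d - x - 1" by simp_all
    have A: "fpoly a d n x = G (a + d + x) (d - x) (Suc k)" by (rule fpoly_nat[OF ms])
    have B: "fpoly (a - 1) d n x = G (a + d + x - 1) (d - x) (Suc k)"
      using fpoly_nat[OF ms, of "a - 1" x] e1(3) by simp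
    have C: "fpoly (a - 1) d (n + 1) (x - 1) = G (a + d + x - 2) (d - x + 1) k"
      using fpoly_nat[OF z, of "a - 1" "x - 1"] e1(1,2) by simp
    have D: "fpoly (a - 1) d n (x + 1) = G (a + d + x) (d - x - 1) (Suc k)"
      using fpoly_nat[OF ms, of "a - 1" "x + 1"] e2 by simp
    have E: "fpoly (a - 1) d (n + 1) (x + 1) = G (a + d + x) (d - x - 1) k"
      using fpoly_nat[OF z, of "a - 1" "x + 1"] e2 by simp
    show ?thesis unfolding A B C D E
      using L1[of "a + d + x" "d - x" k] L2[of "a + d + x" "d - x" k] by simp
  qed
qed

end
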